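(* Let $q=2^\ell$, $r\in[q-1]$, and $0\le a,b\le q-1$. The monomial $x^ay^b$ is $(\Phi,q-r)^*$-good if and only if for all integers $i,j\ge0$ with $i\le_2 b$ and $j\le_2 b-i$ we have $(2i+j+a)\ \mathrm{mod}^*\ q< q-r$.
   Context: $\Phi$ is the set of all polynomials $\phi(x)=\alpha x^2+\beta x+\gamma$ with $\alpha,\beta,\gamma\in\mathbb F_q$. For $f\in\mathbb F_q[x,y]$ and $\phi\in\Phi$, $f|_\phi$ denotes the reduction of $f(x,\phi(x))$ modulo $x^q-x$ (a polynomial of degree $\le q-1$). A polynomial (in particular a monomial) $f$ is $(\Phi,q-r)^*$-good if $\deg f|_\phi<q-r$ for all $\phi\in\Phi$, and bad otherwise. For nonnegative integers $a,b$ with binary digits $a_1,a_2,\dots$ and $b_1,b_2,\dots$, $a\le_2 b$ means $a_i\le b_i$ for all $i$. For $a\ge0$: $a\ \mathrm{mod}^*\ q=a$ if $a\le q-1$; $=q-1$ if $a\ne0$ and $(q-1)\mid a$; otherwise $a\bmod (q-1)$. *)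

theory Defs
  imports "HOL-Computational_Algebra.Polynomial" "HOL-Library.Cardinality"
begin

text \<open>Reduction of f(x,phi(x)) for the monomial f = x^a y^b and
  phi(x) = alpha x^2 + beta x + gamma, modulo x^q - x, where q = |F_q|.\<close>
definition mono_restrict :: "nat \<Rightarrow> nat \<Rightarrow> 'a::{field,finite} \<Rightarrow> 'a \<Rightarrow> 'a \<Rightarrow> 'a poly" where
  "mono_restrict a b \<alpha> \<beta> \<gamma> =
     (monom 1 a * [:\<gamma>, \<beta>, \<alpha>:] ^ b) mod (monom 1 CARD('a) - monom 1 1)"

definition mono_good :: "'a::{field,finite} itself \<Rightarrow> nat \<Rightarrow> nat \<Rightarrow> nat \<Rightarrow> bool" where
  "mono_good _ r a b =
     (\<forall>\<alpha> \<beta> \<gamma> :: 'a. degree (mono_restrict a b \<alpha> \<beta> \<gamma>) < CARD('a) - r)"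

definition bin_le :: "nat \<Rightarrow> nat \<Rightarrow> bool" where
  "bin_le a b = (\<forall>k. (a div 2 ^ k) mod 2 \<le> (b div 2 ^ k) mod 2)"

definition modstar :: "nat \<Rightarrow> nat \<Rightarrow> nat" where
  "modstar a q = (if a \<le> q - 1 then a
                  else if a \<noteq> 0 \<and> (q - 1) dvd a then q - 1
                  else a mod (q - 1))"

end

theory Submission imports Defs "HOL-Library.Z2" "HOL-Library.Disjoint_Sets" begin

lemma bin_le_rec: "bin_le i b \<longleftrightarrow> i mod 2 \<le> b mod 2 \<and> bin_le (i div 2) (b div 2)"
proof
  assume h: "bin_le i b"
  have "i mod 2 \<le> b mod 2" using h[unfolded bin_le_def, rule_format, of 0] by simp
  moreover have "bin_le (i div 2) (b div 2)" unfolding bin_le_def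
  proof
    fix k show "i div 2 div 2 ^ k mod 2 \<le> b div 2 div 2 ^ k mod 2"
      using h[unfolded bin_le_def, rule_format, of "Suc k"] by (simp add: div_mult2_eq)
  qed
  ultimately show "i mod 2 \<le> b mod 2 \<and> bin_le (i div 2) (b div 2)" by blast
next
  assume h: "i mod 2 \<le> b mod 2 \<and> bin_le (i div 2) (b div 2)"
  show "bin_le i b" unfolding bin_le_def
  proof
    fix k show "i div 2 ^ k mod 2 \<le> b div 2 ^ k mod 2"
    proof (cases k)
      case 0 then show ?thesis using h by simp
    next
      case (Suc k') then show ?thesis using h[THEN conjunct2, unfolded bin_le_def, rule_format, of k']
        by (simp add: div_mult2_eq)
    qed
  qed
qed

lemma bin_le_imp_le: "bin_le i b \<Longrightarrow> i \<le> b"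
proof (induction i arbitrary: b rule: less_induct)
  case (less i)
  show ?case
  proof (cases "i = 0")
    case True then show ?thesis by simp
  next
    case False
    have r: "i mod 2 \<le> b mod 2" "bin_le (i div 2) (b div 2)" using less.prems bin_le_rec by blast+
    have "i div 2 \<le> b div 2" using less.IH[OF _ r(2)] False by simp
    then show ?thesis using r(1) div_mult_mod_eq[of i 2] div_mult_mod_eq[of b 2] by linarith
  qed
qed




definition SS :: "nat \<Rightarrow> (nat \<times> nat) set" where
  "SS b = {(i,j). bin_le i b \<and> bin_le j (b - i)}"

lemma bin_le_ee: "bin_le (2*I) (2*c) \<longleftrightarrow> bin_le I c"
  by (subst bin_le_rec) simp
lemma bin_le_oe: "\<not> bin_le (2*I+1) (2*c)"
  by (subst bin_le_rec) simp
lemma bin_le_eo: "bin_le (2*I) (2*c+1) \<longleftrightarrow> bin_le I c"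
  by (subst bin_le_rec) simp
lemma bin_le_oo: "bin_le (2*I+1) (2*c+1) \<longleftrightarrow> bin_le I c"
  by (subst bin_le_rec) simp

lemma SS_bound: "(i,j) \<in> SS b \<Longrightarrow> i \<le> b \<and> j \<le> b - i"
  unfolding SS_def using bin_le_imp_le by auto

lemma finite_SS: "finite (SS b)"
proof -
  have "SS b \<subseteq> {..b} \<times> {..b}" using SS_bound by fastforce
  then show ?thesis by (rule finite_subset) simp
qed

lemma SS_0: "SS 0 = {(0,0)}"
proof -
  have "bin_le 0 0" by (simp add: bin_le_def)
  then show ?thesis using SS_bound by (auto simp: SS_def dest: bin_le_imp_le)
qed

lemma SS_even: "SS (2*c) = (\<lambda>(i,j). (2*i, 2*j)) ` SS c"
proof (intro equalityI subsetI)
  fix x assume x: "x \<in> SS (2*c)"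
  obtain i j where ij: "x = (i,j)" by fastforce
  from x ij have h: "bin_le i (2*c)" "bin_le j (2*c - i)" by (auto simp: SS_def)
  have "even i" using h(1) bin_le_oe by (metis oddE)
  then obtain I where I: "i = 2*I" by blast
  have ed: "2*c - i = 2*(c - I)" using I by simp
  then have "even j" using h(2) bin_le_oe by (metis oddE)
  then obtain J where J: "j = 2*J" by blast
  have "bin_le (2*J) (2*(c-I))" using h(2) ed J by simp
  then have "bin_le J (c-I)" using bin_le_ee by simp
  then have "(I,J) \<in> SS c" using h I bin_le_ee by (simp add: SS_def)
  then show "x \<in> (\<lambda>(i,j). (2*i, 2*j)) ` SS c" using ij I J by force
next
  fix x assume "x \<in> (\<lambda>(i,j). (2*i, 2*j)) ` SS c"
  then obtain I J where x: "x = (2*I, 2*J)" "(I,J) \<in> SS c" by auto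
  then show "x \<in> SS (2*c)" using bin_le_ee by (simp add: SS_def flip: right_diff_distrib')
qed

lemma SS_odd: "SS (2*c+1) = (\<lambda>(i,j). (2*i+1, 2*j)) ` SS c \<union> (\<lambda>(i,j). (2*i, 2*j+1)) ` SS c
   \<union> (\<lambda>(i,j). (2*i, 2*j)) ` SS c"
proof (intro equalityI subsetI)
  fix x assume x: "x \<in> SS (2*c+1)"
  obtain i j where ij: "x = (i,j)" by fastforce
  from x ij have h: "bin_le i (2*c+1)" "bin_le j (2*c+1 - i)" by (auto simp: SS_def)
  have ic: "i \<le> 2*c+1" using h bin_le_imp_le by blast
  show "x \<in> (\<lambda>(i,j). (2*i+1, 2*j)) ` SS c \<union> (\<lambda>(i,j). (2*i, 2*j+1)) ` SS c
   \<union> (\<lambda>(i,j). (2*i, 2*j)) ` SS c"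
  proof (cases "even i")
    case False
    then obtain I where I: "i = 2*I+1" by (metis oddE)
    have IC: "bin_le I c" using h(1) I bin_le_oo by simp
    have ed: "2*c+1 - i = 2*(c - I)" using I by simp
    then have "even j" using h(2) bin_le_oe by (metis oddE)
    then obtain J where J: "j = 2*J" by blast
    have "bin_le (2*J) (2*(c-I))" using h(2) ed J by simp
    then have "bin_le J (c-I)" using bin_le_ee by simp
    then have "(I,J) \<in> SS c" using IC by (simp add: SS_def)
    then show ?thesis using ij I J by force
  next
    case True
    then obtain I where I: "i = 2*I" by blast
    have IC: "bin_le I c" using h(1) I bin_le_eo by simp
    have e: "2*c+1 - i = 2*(c - I) + 1" using I ic by simp
    show ?thesis
    proof (cases "even j")
      case True
      then obtain J where J: "j = 2*J" by blast
      have "(I,J) \<in> SS c" using h(2) e IC J bin_le_eo by (simp add: SS_def)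
      then show ?thesis using ij I J by force
    next
      case False
      then obtain J where J: "j = 2*J+1" by (metis oddE)
      have "(I,J) \<in> SS c" using h(2) e IC J bin_le_oo by (simp add: SS_def)
      then show ?thesis using ij I J by force
    qed
  qed
next
  fix x assume "x \<in> (\<lambda>(i,j). (2*i+1, 2*j)) ` SS c \<union> (\<lambda>(i,j). (2*i, 2*j+1)) ` SS c
   \<union> (\<lambda>(i,j). (2*i, 2*j)) ` SS c"
  then obtain I J where IJ: "(I,J) \<in> SS c" and
    x: "x = (2*I+1, 2*J) \<or> x = (2*I, 2*J+1) \<or> x = (2*I, 2*J)" by auto
  have Ic: "I \<le> c" using IJ SS_bound by blast
  have h: "bin_le I c" "bin_le J (c - I)" using IJ by (auto simp: SS_def)
  have e1: "2*c+1 - (2*I+1) = 2*(c-I)" and e2: "2*c+1 - 2*I = 2*(c-I)+1" using Ic by auto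
  show "x \<in> SS (2*c+1)" using x h e1 e2 bin_le_oo bin_le_eo bin_le_ee
    by (auto simp: SS_def)
qed


lemma sq_sum_char2:
  fixes f :: "'b \<Rightarrow> 'r::comm_ring_1"
  assumes two: "(2::'r) = 0"
  shows "(sum f A)^2 = (\<Sum>x\<in>A. (f x)^2)"
proof (induction A rule: infinite_finite_induct)
  case (insert x F)
  have "(f x + sum f F)^2 = (f x)^2 + sum f F ^2 + 2 * (f x * sum f F)"
    by (simp add: power2_eq_square algebra_simps)
  then show ?case using insert two by simp
qed auto

lemma trinomial_char2:
  fixes u v w :: "'r::comm_ring_1"
  assumes two: "(2::'r) = 0"
  shows "(u+v+w)^b = (\<Sum>(i,j)\<in>SS b. u^i*v^j*w^(b-i-j))"
proof (induction b rule: less_induct)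
  case (less b)
  show ?case
  proof (cases "b = 0")
    case True then show ?thesis by (simp add: SS_0)
  next
    case False
    define c where "c = b div 2"
    have cb: "c < b" using False c_def by simp
    define t where "t = (\<lambda>(i,j). u^i*v^j*w^(c-i-j))"
    have "(u+v+w)^(2*c) = ((u+v+w)^c)^2" by (simp add: power_mult mult.commute)
    also have "\<dots> = (\<Sum>x\<in>SS c. (t x)^2)"
      using less.IH[OF cb] sq_sum_char2[OF two] by (simp add: t_def)
    also have "\<dots> = (\<Sum>(i,j)\<in>SS c. u^(2*i)*v^(2*j)*w^(2*c-2*i-2*j))"
    proof (rule sum.cong[OF refl])
      fix x assume "x \<in> SS c"
      obtain i j where x: "x = (i,j)" by fastforce
      have "2*c-2*i-2*j = 2*(c-i-j)" by simp
      then show "(t x)^2 = (case x of (i,j) \<Rightarrow> u^(2*i)*v^(2*j)*w^(2*c-2*i-2*j))"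
        by (simp add: x t_def power_mult_distrib power_even_eq)
    qed
    finally have E: "(u+v+w)^(2*c) = (\<Sum>(i,j)\<in>SS c. u^(2*i)*v^(2*j)*w^(2*c-2*i-2*j))" .
    have injs: "inj_on (\<lambda>(i::nat,j). (2*i+1, 2*j::nat)) X" "inj_on (\<lambda>(i::nat,j). (2*i, 2*j+1::nat)) X"
      "inj_on (\<lambda>(i::nat,j). (2*i, 2*j::nat)) X" for X
      by (auto simp: inj_on_def)
    show ?thesis
    proof (cases "even b")
      case True
      then have b: "b = 2*c" using c_def by simp
      have "(\<Sum>(i,j)\<in>SS b. u^i*v^j*w^(b-i-j)) = (\<Sum>(i,j)\<in>SS c. u^(2*i)*v^(2*j)*w^(2*c-2*i-2*j))"
        unfolding b SS_even by (subst sum.reindex[OF injs(3)]) (simp add: case_prod_beta)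
      then show ?thesis using E b by simp
    next
      case False
      then have b: "b = 2*c+1" using c_def by simp
      let ?A1 = "(\<lambda>(i,j). (2*i+1, 2*j)) ` SS c"
      let ?A2 = "(\<lambda>(i,j). (2*i, 2*j+1)) ` SS c"
      let ?A3 = "(\<lambda>(i,j). (2*i, 2*j)) ` SS c"
      let ?g = "\<lambda>(i,j). u^i*v^j*w^(b-i-j)"
      have fin: "finite ?A1" "finite ?A2" "finite ?A3" using finite_SS by auto
      have d1: "?A1 \<inter> ?A2 = {}" "(?A1 \<union> ?A2) \<inter> ?A3 = {}" by auto presburger+
      have sb: "SS b = ?A1 \<union> ?A2 \<union> ?A3" using SS_odd b by simp
      have u1: "sum ?g (?A1 \<union> ?A2 \<union> ?A3) = sum ?g (?A1 \<union> ?A2) + sum ?g ?A3"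
        by (rule sum.union_disjoint) (use fin d1 in auto)
      have u2: "sum ?g (?A1 \<union> ?A2) = sum ?g ?A1 + sum ?g ?A2"
        by (rule sum.union_disjoint) (use fin d1 in auto)
      have "(\<Sum>x\<in>SS b. ?g x) = sum ?g ?A1 + sum ?g ?A2 + sum ?g ?A3"
        unfolding sb u1 u2 ..
      also have "sum ?g ?A1 = (\<Sum>(i,j)\<in>SS c. u^(2*i)*v^(2*j)*w^(2*c-2*i-2*j) * u)"
        apply (subst sum.reindex[OF injs(1)])
        apply (rule sum.cong[OF refl])
        apply (auto simp: b algebra_simps)
        done
      also have "sum ?g ?A2 = (\<Sum>(i,j)\<in>SS c. u^(2*i)*v^(2*j)*w^(2*c-2*i-2*j) * v)"
        apply (subst sum.reindex[OF injs(2)])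
        apply (rule sum.cong[OF refl])
        apply (auto simp: b algebra_simps)
        done
      also have "sum ?g ?A3 = (\<Sum>(i,j)\<in>SS c. u^(2*i)*v^(2*j)*w^(2*c-2*i-2*j) * w)"
        apply (subst sum.reindex[OF injs(3)])
        apply (rule sum.cong[OF refl])
        apply clarsimp
        subgoal for i j
        proof -
          assume "(i,j) \<in> SS c"
          then have "2*c+1-2*i-2*j = Suc (2*c-2*i-2*j)" using SS_bound[of i j c] by linarith
          then show ?thesis by (simp add: b algebra_simps)
        qed
        done
      also have "(\<Sum>(i,j)\<in>SS c. u^(2*i)*v^(2*j)*w^(2*c-2*i-2*j) * u)
          + (\<Sum>(i,j)\<in>SS c. u^(2*i)*v^(2*j)*w^(2*c-2*i-2*j) * v)
          + (\<Sum>(i,j)\<in>SS c. u^(2*i)*v^(2*j)*w^(2*c-2*i-2*j) * w)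
          = (\<Sum>(i,j)\<in>SS c. u^(2*i)*v^(2*j)*w^(2*c-2*i-2*j)) * (u+v+w)"
        by (simp add: sum_distrib_right distrib_left case_prod_beta sum.distrib)
      also have "\<dots> = (u+v+w)^b" using E b by simp
      finally show ?thesis by simp
    qed
  qed
qed

lemma char2:
  assumes q: "CARD('a::{field,finite}) = 2 ^ l"
  shows "(2::'a) = 0"
proof (rule ccontr)
  assume two: "(2::'a) \<noteq> 0"
  define N where "N = (UNIV - {0::'a})"
  have "(\<Sum>x\<in>N. (1::bit)) = 0"
  proof (rule sum_involution_eq_0[where h = uminus])
    fix x assume x: "x \<in> N"
    show "(1::bit) + 1 = 0" by simp
    show "- x \<in> N" using x by (simp add: N_def)
    show "- (- x) = x" by simp
    show "- x \<noteq> x"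
    proof
      assume "- x = x"
      then have "2 * x = 0" by (metis mult_2 neg_eq_iff_add_eq_0)
      then show False using two x by (simp add: N_def)
    qed
  qed
  then have "even (card N)" using even_of_nat[where ?'a=bit, of "card N"] by simp
  moreover have "card N + 1 = 2 ^ l" using q unfolding N_def
    by (simp add: card_Diff_singleton)
  moreover have "l \<noteq> 0"
  proof
    assume "l = 0"
    then have "CARD('a) = 1" using q by simp
    then have "(0::'a) = 1" by (metis UNIV_I card_1_singletonE singletonD)
    then show False by simp
  qed
  ultimately show False
    by (metis even_Suc even_power dvd_refl Suc_eq_plus1 gr0I)
qed


lemma char2_poly:
  assumes "(2::'a::field) = 0"
  shows "(2::'a poly) = 0"
proof -
  have "(2::'a poly) = [:2:]" by (simp add: numeral_poly)
  then show ?thesis using assms by simp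
qed

lemma modstar_step:
  assumes q2: "q \<ge> 2" and nq: "n \<ge> q"
  shows "modstar n q = modstar (n - (q - 1)) q"
proof -
  define n' where "n' = n - (q-1)"
  have n'1: "n' \<ge> 1" using assms n'_def by simp
  have m: "n mod (q-1) = n' mod (q-1)" using assms n'_def by (simp add: le_mod_geq)
  have nn: "n = n' + (q-1)" using assms n'_def by simp
  have d: "(q-1) dvd n \<longleftrightarrow> (q-1) dvd n'" using nn by simp
  have L: "modstar n q = (if (q-1) dvd n then q-1 else n mod (q-1))"
    using assms unfolding modstar_def by simp
  show ?thesis
  proof (cases "(q-1) dvd n'")
    case True
    then have "n' mod (q-1) = 0" by simp
    then have "n' \<le> q - 1 \<Longrightarrow> n' = q - 1" using n'1
      by (metis le_neq_implies_less mod_less not_one_le_zero)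
    then have "modstar n' q = q - 1" using True n'1 unfolding modstar_def by auto
    then show ?thesis using L d True n'_def by simp
  next
    case False
    have "n' \<le> q - 1 \<Longrightarrow> n' < q - 1" using False by (metis dvd_refl le_neq_implies_less)
    then have "modstar n' q = n' mod (q-1)" using False unfolding modstar_def by auto
    then show ?thesis using L d False m n'_def by simp
  qed
qed


lemma degree_xq_x:
  assumes "q \<ge> 2"
  shows "degree (monom (1::'a::field) q - monom 1 1) = q"
proof (rule antisym)
  show "degree (monom (1::'a) q - monom 1 1) \<le> q"
    by (rule degree_diff_le) (use assms in \<open>auto simp: degree_monom_eq\<close>)
  have "coeff (monom (1::'a) q - monom 1 1) q \<noteq> 0" using assms by simp
  then show "q \<le> degree (monom (1::'a) q - monom 1 1)" by (rule le_degree)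
qed

lemma xpow_mod:
  assumes q2: "q \<ge> 2"
  shows "monom (1::'a::field) n mod (monom 1 q - monom 1 1) = monom 1 (modstar n q)"
proof (induction n rule: less_induct)
  case (less n)
  let ?d = "monom (1::'a) q - monom 1 1"
  show ?case
  proof (cases "n \<le> q - 1")
    case True
    have "degree (monom (1::'a) n) < degree ?d" using True q2 degree_xq_x[OF q2, where ?'a='a]
      by (simp add: degree_monom_eq)
    then have "monom (1::'a) n mod ?d = monom 1 n" by (rule mod_poly_less)
    then show ?thesis using True by (simp add: modstar_def)
  next
    case False
    then have nq: "n \<ge> q" by simp
    have "monom (1::'a) (n-q) * ?d = monom 1 n - monom 1 (n - (q-1))"
    proof -
      have e: "Suc (n - q) = n - (q - Suc 0)" "n - q + q = n" using nq q2 by auto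
      show ?thesis by (simp add: right_diff_distrib mult_monom e)
    qed
    then have "monom (1::'a) n = monom 1 (n - (q-1)) + monom 1 (n-q) * ?d" by simp
    then have "monom (1::'a) n mod ?d = monom 1 (n - (q-1)) mod ?d"
      by (metis mod_mult_self1)
    also have "\<dots> = monom 1 (modstar (n - (q-1)) q)"
      using less.IH[of "n - (q-1)"] nq q2 by simp
    also have "\<dots> = monom 1 (modstar n q)" using modstar_step[OF q2 nq] by simp
    finally show ?thesis .
  qed
qed

lemma mod_sum_poly:
  fixes f :: "'b \<Rightarrow> 'a::field poly"
  shows "(sum f A) mod d = (\<Sum>x\<in>A. f x mod d)"
  by (induction A rule: infinite_finite_induct) (auto simp: poly_mod_add_left)


lemma trinom_poly: "[:\<gamma>, \<beta>, \<alpha>:] = monom \<alpha> 2 + monom \<beta> 1 + [:\<gamma>::'a::comm_ring_1:]"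
  by (auto simp: poly_eq_iff coeff_monom coeff_pCons split: nat.split)

lemma monom_mod:
  assumes q2: "q \<ge> 2"
  shows "monom (c::'a::field) n mod (monom 1 q - monom 1 1) = monom c (modstar n q)"
proof -
  have "monom c n mod (monom 1 q - monom 1 1) = smult c (monom 1 n mod (monom 1 q - monom 1 1))"
    by (metis mod_smult_left smult_monom mult.right_neutral)
  then show ?thesis using xpow_mod[OF q2, where ?'a='a] by (simp add: smult_monom)
qed

lemma restrict_formula:
  fixes \<alpha> \<beta> \<gamma> :: "'a::{field,finite}"
  assumes q2: "CARD('a::{field,finite}) \<ge> 2" and two: "(2::'a) = 0"
  shows "mono_restrict a b \<alpha> \<beta> \<gamma> =
    (\<Sum>(i,j)\<in>SS b. monom (\<alpha>^i*\<beta>^j*\<gamma>^(b-i-j)) (modstar (2*i+j+a) CARD('a)))"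
proof -
  have tp: "[:\<gamma>, \<beta>, \<alpha>:] ^ b = (\<Sum>(i,j)\<in>SS b. monom (\<alpha>^i*\<beta>^j*\<gamma>^(b-i-j)) (2*i+j))"
  proof -
    have "[:\<gamma>, \<beta>, \<alpha>:] ^ b = (monom \<alpha> 2 + monom \<beta> 1 + [:\<gamma>:]) ^ b" using trinom_poly by metis
    also have "\<dots> = (\<Sum>(i,j)\<in>SS b. monom \<alpha> 2 ^ i * monom \<beta> 1 ^ j * [:\<gamma>:] ^ (b - i - j))"
      using trinomial_char2[OF char2_poly[OF two], of "monom \<alpha> 2" "monom \<beta> 1" "[:\<gamma>:]" b] by simp
    also have "\<dots> = (\<Sum>(i,j)\<in>SS b. monom (\<alpha>^i*\<beta>^j*\<gamma>^(b-i-j)) (2*i+j))"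
  proof (rule sum.cong[OF refl], clarify)
    fix i j
    show "monom \<alpha> 2 ^ i * monom \<beta> 1 ^ j * [:\<gamma>:] ^ (b - i - j) =
          monom (\<alpha> ^ i * \<beta> ^ j * \<gamma> ^ (b - i - j)) (2 * i + j)"
      by (simp add: monom_power mult_monom flip: monom_0 mult.assoc)
  qed
  finally show ?thesis .
  qed
  have e: "monom 1 a * [:\<gamma>, \<beta>, \<alpha>:] ^ b = (\<Sum>(i,j)\<in>SS b. monom (\<alpha>^i*\<beta>^j*\<gamma>^(b-i-j)) (2*i+j+a))"
    unfolding tp sum_distrib_left by (rule sum.cong[OF refl]) (auto simp: mult_monom add.commute)
  show ?thesis unfolding mono_restrict_def e mod_sum_poly
    by (rule sum.cong[OF refl]) (clarify, rule monom_mod[OF q2])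
qed

lemma coeff_restrict:
  fixes \<alpha> \<beta> \<gamma> :: "'a::{field,finite}"
  assumes q2: "CARD('a::{field,finite}) \<ge> 2" and two: "(2::'a) = 0"
  shows "coeff (mono_restrict a b \<alpha> \<beta> \<gamma>) e =
    (\<Sum>(i,j)\<in>{x\<in>SS b. modstar (2*fst x+snd x+a) CARD('a) = e}. \<alpha>^i*\<beta>^j*\<gamma>^(b-i-j))"
  unfolding restrict_formula[OF q2 two] coeff_sum
  by (simp add: sum.inter_filter finite_SS coeff_monom case_prod_beta eq_commute)


lemma poly_nonzero_point:
  fixes p :: "'a::{field,finite} poly"
  assumes "p \<noteq> 0" "degree p < CARD('a)"
  shows "\<exists>x. poly p x \<noteq> 0"
proof (rule ccontr)
  assume "\<not> (\<exists>x. poly p x \<noteq> 0)"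
  then have "{x. poly p x = 0} = UNIV" by auto
  then have "CARD('a) \<le> degree p" using card_poly_roots_bound[OF assms(1)] by simp
  then show False using assms(2) by simp
qed

lemma degree_lt_by_coeff:
  assumes "\<And>n. n \<ge> N \<Longrightarrow> coeff p n = 0" "N \<ge> 1"
  shows "degree p < N"
proof -
  have "degree p \<le> N - 1" by (rule degree_le) (use assms in auto)
  then show ?thesis using assms(2) by simp
qed

lemma bivar_nonzero:
  fixes T :: "(nat \<times> nat) set"
  assumes fin: "finite T" and mem: "(i0,j0) \<in> T"
    and bd: "\<And>i j. (i,j) \<in> T \<Longrightarrow> i < CARD('a::{field,finite}) \<and> j < CARD('a)"
  shows "\<exists>\<alpha> \<beta>::'a. (\<Sum>(i,j)\<in>T. \<alpha>^i*\<beta>^j) \<noteq> 0"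
proof -
  define p1 :: "'a poly" where "p1 = (\<Sum>(i,j)\<in>T. if i = i0 then monom 1 j else 0)"
  have c1: "coeff p1 n = (\<Sum>x\<in>T. if x = (i0, n) then 1 else 0)" for n
    unfolding p1_def coeff_sum by (rule sum.cong[OF refl]) (auto simp: coeff_monom split: if_splits)
  have "coeff p1 j0 = 1" unfolding c1 using fin mem by (simp add: sum.delta)
  then have p1nz: "p1 \<noteq> 0" by auto
  have "degree p1 < CARD('a)"
  proof (rule degree_lt_by_coeff)
    fix n assume n: "n \<ge> CARD('a)"
    have "(i0, n) \<notin> T" using bd n by force
    then show "coeff p1 n = 0" unfolding c1 using fin by (simp add: sum.delta)
  qed (simp add: Suc_leI)
  then obtain \<beta>0 where b0: "poly p1 \<beta>0 \<noteq> 0" using poly_nonzero_point p1nz by blast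
  have pp1: "poly p1 \<beta>0 = (\<Sum>(i,j)\<in>T. if i = i0 then \<beta>0^j else 0)"
    unfolding p1_def poly_sum by (rule sum.cong[OF refl]) (auto simp: poly_monom)
  define p2 :: "'a poly" where "p2 = (\<Sum>(i,j)\<in>T. monom (\<beta>0^j) i)"
  have c2: "coeff p2 n = (\<Sum>(i,j)\<in>T. if i = n then \<beta>0^j else 0)" for n
    unfolding p2_def coeff_sum by (rule sum.cong[OF refl]) (auto simp: coeff_monom)
  have "coeff p2 i0 = poly p1 \<beta>0" unfolding c2 pp1 by (rule sum.cong[OF refl]) auto
  then have p2nz: "p2 \<noteq> 0" using b0 by auto
  have "degree p2 < CARD('a)"
  proof (rule degree_lt_by_coeff)
    fix n assume n: "n \<ge> CARD('a)"
    show "coeff p2 n = 0" unfolding c2 by (rule sum.neutral) (use bd n in force)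
  qed (simp add: Suc_leI)
  then obtain \<alpha>0 where a0: "poly p2 \<alpha>0 \<noteq> 0" using poly_nonzero_point p2nz by blast
  have "poly p2 \<alpha>0 = (\<Sum>(i,j)\<in>T. \<alpha>0^i*\<beta>0^j)"
    unfolding p2_def poly_sum by (rule sum.cong[OF refl]) (auto simp: poly_monom mult.commute)
  then show ?thesis using a0 by metis
qed


theorem mainTheorem3:
  fixes l r a b :: nat
  assumes q: "CARD('a::{field,finite}) = 2 ^ l"
    and r: "1 \<le> r" "r \<le> CARD('a) - 1"
    and ab: "a \<le> CARD('a) - 1" "b \<le> CARD('a) - 1"
  shows "mono_good TYPE('a) r a b \<longleftrightarrow>
    (\<forall>i j. bin_le i b \<longrightarrow> bin_le j (b - i) \<longrightarrow>
       modstar (2 * i + j + a) CARD('a) < CARD('a) - r)"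
proof -
  have q2: "CARD('a) \<ge> 2" using r by linarith
  have two: "(2::'a) = 0" using char2[OF q] .
  have qr: "CARD('a) - r \<ge> 1" using r by linarith
  show ?thesis
  proof
    assume good: "mono_good TYPE('a) r a b"
    show "\<forall>i j. bin_le i b \<longrightarrow> bin_le j (b - i) \<longrightarrow>
       modstar (2 * i + j + a) CARD('a) < CARD('a) - r"
    proof (rule ccontr)
      assume "\<not> ?thesis"
      then obtain i0 j0 where h: "bin_le i0 b" "bin_le j0 (b - i0)"
        and big: "\<not> modstar (2 * i0 + j0 + a) CARD('a) < CARD('a) - r" by blast
      define e where "e = modstar (2 * i0 + j0 + a) CARD('a)"
      define T where "T = {x\<in>SS b. modstar (2*fst x+snd x+a) CARD('a) = e}"
      have fin: "finite T" unfolding T_def using finite_SS by simp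
      have mem: "(i0,j0) \<in> T" unfolding T_def e_def SS_def using h by simp
      have bd: "i < CARD('a) \<and> j < CARD('a)" if "(i,j) \<in> T" for i j
        using that SS_bound[of i j b] ab q2 unfolding T_def by auto
      obtain \<alpha> \<beta> :: 'a where nz: "(\<Sum>(i,j)\<in>T. \<alpha>^i*\<beta>^j) \<noteq> 0"
        using bivar_nonzero[OF fin mem bd] by blast
      have "coeff (mono_restrict a b \<alpha> \<beta> 1) e = (\<Sum>(i,j)\<in>T. \<alpha>^i*\<beta>^j)"
        unfolding coeff_restrict[OF q2 two] T_def by simp
      then have "e \<le> degree (mono_restrict a b \<alpha> \<beta> 1)" using nz by (metis le_degree)
      moreover have "degree (mono_restrict a b \<alpha> \<beta> 1) < CARD('a) - r"
        using good unfolding mono_good_def by blast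
      ultimately show False using big e_def by simp
    qed
  next
    assume R: "\<forall>i j. bin_le i b \<longrightarrow> bin_le j (b - i) \<longrightarrow>
       modstar (2 * i + j + a) CARD('a) < CARD('a) - r"
    show "mono_good TYPE('a) r a b" unfolding mono_good_def
    proof (intro allI)
      fix \<alpha> \<beta> \<gamma> :: 'a
      show "degree (mono_restrict a b \<alpha> \<beta> \<gamma>) < CARD('a) - r"
      proof (rule degree_lt_by_coeff[OF _ qr])
        fix n assume n: "n \<ge> CARD('a) - r"
        have E: "{x\<in>SS b. modstar (2*fst x+snd x+a) CARD('a) = n} = {}"
          using R n unfolding SS_def by fastforce
        show "coeff (mono_restrict a b \<alpha> \<beta> \<gamma>) n = 0"
          unfolding coeff_restrict[OF q2 two] E by simp
      qed
    qed
  qed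
qed

end
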